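(* Let $M$ be a finite abelian group of order $m$, $J$ a Jacobi function on $M$, $c\in\hat{M}$ with $c^2=1$, and $i\colon\hat{M}\setminus\{c\}\to\hat{M}\setminus\{1\}$ a bijection with $i(x)=x\,i(x^{-1})$ for all $x\ne c$, such that $J(\alpha,\beta)=\frac{1}{m}\sum_{x\in\hat{M}\setminus\{c\}}\alpha(i(x))\beta(i(x)x^{-1})$ for all $\alpha,\beta\in M$. Let $F=\hat{M}\sqcup\{0\}$ with the operation $\oplus$ for which $0$ is the identity and, for $x,y\ne0$, $x\oplus y=0$ if $x=cy$ and $x\oplus y=x\,i(x/y)^{-1}$ otherwise. Then for all $\alpha,\beta,\gamma\in M$, \[ \sum_{\substack{(x\oplus y)\oplus z=1,\\ x,y,z\in F\setminus\{0\}}}\alpha(x)\beta(y)\gamma(z)=\sum_{\substack{x\oplus(y\oplus z)=1,\\ x,y,z\in F\setminus\{0\}}}\alpha(x)\beta(y)\gamma(z). \]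
   Context: $\hat{M}$ is the Pontryagin dual of $M$, written multiplicatively with identity $1$; for $\alpha\in M$, $x\in\hat{M}$, $\alpha(x)$ is the value of the character $x$ at $\alpha$. $\delta(\alpha)=1$ if $\alpha$ is the identity of $M$ and $0$ otherwise. A Jacobi function on $M$ is a function $J\colon M\times M\to\mathbf{C}$ satisfying: (A) $J(\alpha,\beta)=J(\beta,\alpha)$; (B) with $J^*(\alpha,\beta)=-\delta(\alpha)-\delta(\beta)+J(\alpha,\beta)$, $J^*(\alpha,\beta)J^*(\alpha\beta,\gamma)=J^*(\alpha,\beta\gamma)J^*(\beta,\gamma)$; (C) $\sum_{\beta\in M}J(\alpha_1\beta,\alpha_2\beta^{-1})J(\alpha_3\beta,\alpha_4\beta^{-1})=J(\alpha_1\alpha_4,\alpha_2\alpha_3)$; all for all elements of $M$. *)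

theory Defs
  imports Complex_Main
begin

text \<open>The finite abelian group M is modelled as a finite type of class ab_group_add
  (written additively: the paper's product alpha beta is a + b, the identity is 0,
  beta^-1 is - b).\<close>

definition dual :: "('a::ab_group_add \<Rightarrow> complex) set" where
  "dual = {\<chi>. (\<forall>a b. \<chi> (a + b) = \<chi> a * \<chi> b) \<and> (\<forall>a. cmod (\<chi> a) = 1)}"

definition chmul :: "('a \<Rightarrow> complex) \<Rightarrow> ('a \<Rightarrow> complex) \<Rightarrow> ('a \<Rightarrow> complex)" where
  "chmul x y = (\<lambda>a. x a * y a)"

definition chone :: "'a \<Rightarrow> complex" where
  "chone = (\<lambda>a. 1)"

definition chinv :: "('a \<Rightarrow> complex) \<Rightarrow> ('a \<Rightarrow> complex)" where
  "chinv x = (\<lambda>a. inverse (x a))"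

definition delta :: "'a::zero \<Rightarrow> complex" where
  "delta a = (if a = 0 then 1 else 0)"

definition Jstar :: "('a::ab_group_add \<Rightarrow> 'a \<Rightarrow> complex) \<Rightarrow> 'a \<Rightarrow> 'a \<Rightarrow> complex" where
  "Jstar J a b = - delta a - delta b + J a b"

definition jacobi :: "('a::{ab_group_add,finite} \<Rightarrow> 'a \<Rightarrow> complex) \<Rightarrow> bool" where
  "jacobi J \<longleftrightarrow>
     (\<forall>a b. J a b = J b a) \<and>
     (\<forall>a b g. Jstar J a b * Jstar J (a + b) g = Jstar J a (b + g) * Jstar J b g) \<and>
     (\<forall>a1 a2 a3 a4. (\<Sum>b\<in>UNIV. J (a1 + b) (a2 - b) * J (a3 + b) (a4 - b)) = J (a1 + a4) (a2 + a3))"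

text \<open>F = dual plus a new element 0, modelled by option: None is 0, Some x is x.\<close>
definition oplus :: "('a \<Rightarrow> complex) \<Rightarrow> (('a \<Rightarrow> complex) \<Rightarrow> ('a \<Rightarrow> complex))
    \<Rightarrow> ('a \<Rightarrow> complex) option \<Rightarrow> ('a \<Rightarrow> complex) option \<Rightarrow> ('a \<Rightarrow> complex) option" where
  "oplus c i u v = (case u of None \<Rightarrow> v | Some x \<Rightarrow> (case v of None \<Rightarrow> Some x | Some y \<Rightarrow>
      (if x = chmul c y then None else Some (chmul x (chinv (i (chmul x (chinv y))))))))"

end

theory Submission
  imports Defs "HOL-Library.FuncSet"
begin


fun nsm :: "nat \<Rightarrow> 'a::ab_group_add \<Rightarrow> 'a" where
  "nsm 0 g = 0"
| "nsm (Suc n) g = g + nsm n g"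

lemma nsm_add: "nsm (m + n) g = nsm m g + nsm n g"
  by (induction m) (simp_all add: add.assoc)

lemma nsm_order: "\<exists>k>0. nsm k (g::'a::{ab_group_add,finite}) = 0"
proof -
  have "\<not> inj (\<lambda>n. nsm n g)"
  proof
    assume "inj (\<lambda>n. nsm n g)"
    moreover have "finite (range (\<lambda>n. nsm n g))" by simp
    ultimately have "finite (UNIV::nat set)" using finite_imageD by blast
    thus False by simp
  qed
  then obtain n1 n2 where "n1 \<noteq> n2" "nsm n1 g = nsm n2 g" unfolding inj_def by blast
  then obtain p q where pq: "p < q" "nsm p g = nsm q g" by (metis linorder_neq_iff)
  have "nsm q g = nsm (q - p) g + nsm p g" using nsm_add[of "q-p" p g] pq(1) by simp
  hence "nsm (q-p) g = 0" using pq(2) by simp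
  thus ?thesis using pq(1) by (intro exI[of _ "q-p"]) simp
qed

lemma dual_add: "x \<in> dual \<Longrightarrow> x (a+b) = x a * x b" by (auto simp: dual_def)
lemma dual_norm: "x \<in> dual \<Longrightarrow> cmod (x a) = 1" by (auto simp: dual_def)
lemma dual_nz: "x \<in> dual \<Longrightarrow> x a \<noteq> 0" by (metis dual_norm norm_zero zero_neq_one)
lemma dual_0: "x \<in> dual \<Longrightarrow> x 0 = 1"
proof -
  assume d: "x \<in> dual"
  have "x 0 = x 0 * x 0" using dual_add[OF d, of 0 0] by simp
  thus ?thesis using dual_nz[OF d, of 0] by simp
qed
lemma dual_neg: "x \<in> dual \<Longrightarrow> x (-a) = inverse (x a)"
proof -
  assume d: "x \<in> dual"
  have "x a * x (-a) = 1" using dual_add[OF d, of a "-a"] dual_0[OF d] by simp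
  thus ?thesis using dual_nz[OF d, of a] by (simp add: inverse_eq_divide eq_divide_eq mult.commute)
qed
lemma dual_nsm: "x \<in> dual \<Longrightarrow> x (nsm k a) = x a ^ k"
  by (induction k) (simp_all add: dual_0 dual_add)

lemma chmul_dual: "x \<in> dual \<Longrightarrow> y \<in> dual \<Longrightarrow> chmul x y \<in> dual"
  by (auto simp: dual_def chmul_def norm_mult)
lemma chinv_dual: "x \<in> dual \<Longrightarrow> chinv x \<in> dual"
  by (auto simp: dual_def chinv_def norm_inverse)
lemma chone_dual: "chone \<in> dual"
  by (auto simp: dual_def chone_def)

lemma ext_step:
  fixes H :: "'a::{ab_group_add,finite} set" and \<chi> :: "'a \<Rightarrow> complex"
  assumes H0: "0 \<in> H" and Hadd: "\<And>x y. x \<in> H \<Longrightarrow> y \<in> H \<Longrightarrow> x + y \<in> H"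
    and Hneg: "\<And>x. x \<in> H \<Longrightarrow> -x \<in> H"
    and hom: "\<And>x y. x \<in> H \<Longrightarrow> y \<in> H \<Longrightarrow> \<chi> (x+y) = \<chi> x * \<chi> y"
    and nrm: "\<And>x. x \<in> H \<Longrightarrow> cmod (\<chi> x) = 1"
    and gH: "g \<notin> H"
    and kdef: "k = (LEAST k. 0 < k \<and> nsm k g \<in> H)"
    and w1: "cmod w = 1" and wk: "w ^ k = \<chi> (nsm k g)"
  obtains H' \<chi>' where "0 \<in> H'" "\<And>x y. x \<in> H' \<Longrightarrow> y \<in> H' \<Longrightarrow> x + y \<in> H'"
    "\<And>x. x \<in> H' \<Longrightarrow> -x \<in> H'"
    "\<And>x y. x \<in> H' \<Longrightarrow> y \<in> H' \<Longrightarrow> \<chi>' (x+y) = \<chi>' x * \<chi>' y"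
    "\<And>x. x \<in> H' \<Longrightarrow> cmod (\<chi>' x) = 1"
    "H \<subseteq> H'" "g \<in> H'" "\<And>x. x \<in> H \<Longrightarrow> \<chi>' x = \<chi> x" "\<chi>' g = w"
proof -
  obtain k0 where k0: "k0 > 0" "nsm k0 g = 0" using nsm_order by blast
  have kP: "0 < k \<and> nsm k g \<in> H" unfolding kdef by (rule LeastI[of _ k0]) (use k0 H0 in simp)
  have kmin: "\<And>j. 0 < j \<Longrightarrow> j < k \<Longrightarrow> nsm j g \<notin> H"
    using not_less_Least kdef by blast
  have "k \<noteq> 1" using kP gH by auto
  hence k1: "1 < k" using kP by linarith
  have Hdiff: "\<And>x y. x \<in> H \<Longrightarrow> y \<in> H \<Longrightarrow> x - y \<in> H"
    using Hadd Hneg by (metis diff_conv_add_uminus)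
  have uniq0: "j1 = j2" if "j1 < j2" "j2 < k" "x - nsm j1 g \<in> H" "x - nsm j2 g \<in> H" for j1 j2 x
  proof -
    have "nsm j2 g = nsm (j2 - j1) g + nsm j1 g" using nsm_add[of "j2-j1" j1 g] that(1) by simp
    hence eq: "nsm (j2 - j1) g = (x - nsm j1 g) - (x - nsm j2 g)" by (simp add: algebra_simps)
    have "nsm (j2 - j1) g \<in> H" unfolding eq by (rule Hdiff[OF that(3,4)])
    thus ?thesis using kmin[of "j2 - j1"] that by simp
  qed
  have uniq: "j1 = j2" if "j1 < k" "j2 < k" "x - nsm j1 g \<in> H" "x - nsm j2 g \<in> H" for j1 j2 x
    using uniq0[of j1 j2 x] uniq0[of j2 j1 x] that by (metis linorder_neq_iff)
  define H' where "H' = {h + nsm j g | h j. h \<in> H \<and> j < k}"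
  define jf where "jf x = (SOME j. j < k \<and> x - nsm j g \<in> H)" for x
  have jf: "jf x < k \<and> x - nsm (jf x) g \<in> H" if "x \<in> H'" for x
  proof -
    from that obtain h j where "x = h + nsm j g" "h \<in> H" "j < k" unfolding H'_def by blast
    hence "j < k \<and> x - nsm j g \<in> H" by simp
    thus ?thesis unfolding jf_def by (rule someI)
  qed
  have jf_eq: "jf x = j" if "j < k" "x - nsm j g \<in> H" for x j
  proof -
    have "jf x < k \<and> x - nsm (jf x) g \<in> H" unfolding jf_def by (rule someI[of _ j]) (use that in simp)
    thus ?thesis using uniq that by blast
  qed
  define \<chi>' where "\<chi>' x = \<chi> (x - nsm (jf x) g) * w ^ jf x" for x
  have chi0: "\<chi> 0 = 1"
  proof -
    have "\<chi> 0 = \<chi> 0 * \<chi> 0" using hom[OF H0 H0] by simp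
    moreover have "\<chi> 0 \<noteq> 0" using nrm[OF H0] by auto
    ultimately show ?thesis by simp
  qed
  show ?thesis
  proof (rule that[of H' \<chi>'])
    show "0 \<in> H'" unfolding H'_def using H0 kP by (intro CollectI exI[of _ 0]) auto
  next
    fix x y assume "x \<in> H'" "y \<in> H'"
    then obtain h1 j1 h2 j2 where xy: "x = h1 + nsm j1 g" "h1 \<in> H" "j1 < k"
      "y = h2 + nsm j2 g" "h2 \<in> H" "j2 < k" unfolding H'_def by blast
    show "x + y \<in> H'"
    proof (cases "j1 + j2 < k")
      case True
      have "x + y = (h1 + h2) + nsm (j1 + j2) g" using xy by (simp add: nsm_add algebra_simps)
      thus ?thesis unfolding H'_def using True Hadd xy by blast
    next
      case False
      have "nsm (j1 + j2) g = nsm k g + nsm (j1 + j2 - k) g"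
        using nsm_add[of k "j1+j2-k" g] False by simp
      hence "x + y = (h1 + h2 + nsm k g) + nsm (j1 + j2 - k) g" using xy
        by (simp add: nsm_add[symmetric] algebra_simps)
      moreover have "j1 + j2 - k < k" using xy by linarith
      ultimately show ?thesis unfolding H'_def using Hadd xy kP by blast
    qed
  next
    fix x assume "x \<in> H'"
    then obtain h j where xy: "x = h + nsm j g" "h \<in> H" "j < k" unfolding H'_def by blast
    show "-x \<in> H'"
    proof (cases "j = 0")
      case True
      thus ?thesis unfolding H'_def using xy Hneg kP by (intro CollectI exI[of _ "-h"] exI[of _ 0]) auto
    next
      case False
      have "nsm k g = nsm (k - j) g + nsm j g" using nsm_add[of "k-j" j g] xy by simp
      hence "-x = (-h + - nsm k g) + nsm (k - j) g" using xy by (simp add: algebra_simps)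
      moreover have "-h + - nsm k g \<in> H" using Hadd Hneg kP xy by blast
      ultimately show ?thesis unfolding H'_def using False xy
        by (intro CollectI exI[of _ "-h + - nsm k g"] exI[of _ "k-j"]) auto
    qed
  next
    fix x y assume xH: "x \<in> H'" and yH: "y \<in> H'"
    define jx jy where "jx = jf x" and "jy = jf y"
    define hx hy where "hx = x - nsm jx g" and "hy = y - nsm jy g"
    have hx: "hx \<in> H" "jx < k" using jf[OF xH] hx_def jx_def by auto
    have hy: "hy \<in> H" "jy < k" using jf[OF yH] hy_def jy_def by auto
    show "\<chi>' (x + y) = \<chi>' x * \<chi>' y"
    proof (cases "jx + jy < k")
      case True
      have "x + y - nsm (jx + jy) g = hx + hy" unfolding hx_def hy_def by (simp add: nsm_add algebra_simps)
      hence "jf (x + y) = jx + jy" using jf_eq True Hadd hx hy by simp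
      thus ?thesis unfolding \<chi>'_def using \<open>x + y - nsm (jx + jy) g = hx + hy\<close> hom[OF hx(1) hy(1)]
        by (simp add: jx_def[symmetric] jy_def[symmetric] hx_def[symmetric] hy_def[symmetric] power_add)
    next
      case False
      have e: "nsm (jx + jy) g = nsm (jx + jy - k) g + nsm k g"
        using nsm_add[of "jx + jy - k" k g] False by simp
      have e2: "x + y - nsm (jx + jy - k) g = hx + hy + nsm k g" unfolding hx_def hy_def
        using e by (simp add: nsm_add algebra_simps)
      have lt: "jx + jy - k < k" using hx hy by linarith
      hence "jf (x + y) = jx + jy - k" using jf_eq e2 Hadd hx hy kP by simp
      hence "\<chi>' (x + y) = \<chi> hx * \<chi> hy * \<chi> (nsm k g) * w ^ (jx + jy - k)"
        unfolding \<chi>'_def using e2 hom Hadd hx hy kP by simp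
      also have "\<dots> = \<chi> hx * \<chi> hy * w ^ (jx + jy - k + k)" by (simp add: wk[symmetric] power_add)
      also have "jx + jy - k + k = jx + jy" using False by simp
      finally show ?thesis unfolding \<chi>'_def
        by (simp add: jx_def[symmetric] jy_def[symmetric] hx_def[symmetric] hy_def[symmetric] power_add)
    qed
  next
    fix x assume "x \<in> H'"
    thus "cmod (\<chi>' x) = 1" unfolding \<chi>'_def using jf nrm w1 by (simp add: norm_mult norm_power)
  next
    show "H \<subseteq> H'"
    proof
      fix x assume "x \<in> H"
      thus "x \<in> H'" unfolding H'_def using kP by (intro CollectI exI[of _ x] exI[of _ 0]) auto
    qed
  next
    show "g \<in> H'" unfolding H'_def using k1 H0 by (intro CollectI exI[of _ 0] exI[of _ 1]) auto
  next
    fix x assume "x \<in> H"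
    hence "jf x = 0" using jf_eq kP by simp
    thus "\<chi>' x = \<chi> x" unfolding \<chi>'_def by simp
  next
    have "jf g = 1" using jf_eq k1 H0 by simp
    thus "\<chi>' g = w" unfolding \<chi>'_def using chi0 by simp
  qed
qed



lemma char_ext:
  fixes H :: "'a::{ab_group_add,finite} set" and \<chi> :: "'a \<Rightarrow> complex"
  shows "0 \<in> H \<Longrightarrow> (\<And>x y. x \<in> H \<Longrightarrow> y \<in> H \<Longrightarrow> x + y \<in> H) \<Longrightarrow> (\<And>x. x \<in> H \<Longrightarrow> -x \<in> H)
    \<Longrightarrow> (\<And>x y. x \<in> H \<Longrightarrow> y \<in> H \<Longrightarrow> \<chi> (x+y) = \<chi> x * \<chi> y)
    \<Longrightarrow> (\<And>x. x \<in> H \<Longrightarrow> cmod (\<chi> x) = 1) \<Longrightarrow> \<exists>\<psi>\<in>dual. \<forall>x\<in>H. \<psi> x = \<chi> x"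
proof (induction "card (UNIV - H)" arbitrary: H \<chi> rule: less_induct)
  case less
  show ?case
  proof (cases "H = UNIV")
    case True
    hence "\<chi> \<in> dual" using less.prems unfolding dual_def by auto
    thus ?thesis by blast
  next
    case False
    then obtain g where gH: "g \<notin> H" by auto
    define k where "k = (LEAST k. 0 < k \<and> nsm k g \<in> H)"
    obtain k0 where k0: "k0 > 0" "nsm k0 g = 0" using nsm_order by blast
    have kP: "0 < k \<and> nsm k g \<in> H" unfolding k_def by (rule LeastI[of _ k0]) (use k0 less.prems in simp)
    define z where "z = \<chi> (nsm k g)"
    have z1: "cmod z = 1" unfolding z_def using less.prems kP by simp
    hence z0: "z \<noteq> 0" by auto
    define w where "w = cis (Arg z / k)"
    have "w ^ k = cis (Arg z)" unfolding w_def DeMoivre using kP by simp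
    also have "\<dots> = z" using z0 z1 by (simp add: cis_Arg sgn_eq)
    finally have wk: "w ^ k = \<chi> (nsm k g)" unfolding z_def .
    have w1: "cmod w = 1" unfolding w_def by simp
    obtain H' \<chi>' where H': "0 \<in> H'" "\<And>x y. x \<in> H' \<Longrightarrow> y \<in> H' \<Longrightarrow> x + y \<in> H'"
      "\<And>x. x \<in> H' \<Longrightarrow> -x \<in> H'"
      "\<And>x y. x \<in> H' \<Longrightarrow> y \<in> H' \<Longrightarrow> \<chi>' (x+y) = \<chi>' x * \<chi>' y"
      "\<And>x. x \<in> H' \<Longrightarrow> cmod (\<chi>' x) = 1"
      "H \<subseteq> H'" "g \<in> H'" "\<And>x. x \<in> H \<Longrightarrow> \<chi>' x = \<chi> x" "\<chi>' g = w"
      using ext_step[OF less.prems gH k_def w1 wk] by blast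
    have "UNIV - H' \<subset> UNIV - H" using H'(6,7) gH by blast
    hence "card (UNIV - H') < card (UNIV - H)" by (rule psubset_card_mono[rotated]) simp
    from less.hyps[OF this H'(1-5)] obtain \<psi> where "\<psi> \<in> dual" "\<forall>x\<in>H'. \<psi> x = \<chi>' x" by blast
    show ?thesis
    proof (intro bexI[of _ \<psi>] ballI)
      fix x assume "x \<in> H"
      thus "\<psi> x = \<chi> x" using H'(6,8) \<open>\<forall>x\<in>H'. \<psi> x = \<chi>' x\<close> by auto
    qed fact
  qed
qed

lemma separation:
  fixes a :: "'a::{ab_group_add,finite}"
  assumes "a \<noteq> 0"
  shows "\<exists>\<psi>\<in>dual. \<psi> a \<noteq> 1"
proof -
  define k where "k = (LEAST k. 0 < k \<and> nsm k a \<in> {0})"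
  obtain k0 where k0: "k0 > 0" "nsm k0 a = 0" using nsm_order by blast
  have kP: "0 < k \<and> nsm k a \<in> {0}" unfolding k_def by (rule LeastI[of _ k0]) (use k0 in simp)
  have "k \<noteq> 1" using kP assms by auto
  hence k2: "2 \<le> k" using kP by linarith
  have ck: "card {z::complex. z ^ k = 1} = k" using kP by (simp add: card_roots_unity_eq)
  have "\<not> {z::complex. z ^ k = 1} \<subseteq> {1}"
  proof
    assume "{z::complex. z ^ k = 1} \<subseteq> {1}"
    hence "card {z::complex. z ^ k = 1} \<le> card {1::complex}" by (intro card_mono) simp_all
    thus False using ck k2 by simp
  qed
  then obtain w :: complex where w: "w ^ k = 1" "w \<noteq> 1" by blast
  have "cmod w ^ k = 1 ^ k" using w by (metis norm_one norm_power power_one)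
  hence w1: "cmod w = 1" using kP power_eq_iff_eq_base[of k "cmod w" 1] by (simp only: norm_ge_zero zero_le_one simp_thms)
  define \<chi>0 where "\<chi>0 = (\<lambda>_::'a. 1::complex)"
  have wk: "w ^ k = \<chi>0 (nsm k a)" using w unfolding \<chi>0_def by simp
  have aH: "a \<notin> {0}" using assms by simp
  have p1: "(0::'a) \<in> {0}" by simp
  have p2: "\<And>x y. x \<in> {0::'a} \<Longrightarrow> y \<in> {0} \<Longrightarrow> x + y \<in> {0}" by simp
  have p3: "\<And>x. x \<in> {0::'a} \<Longrightarrow> -x \<in> {0}" by simp
  have p4: "\<And>x y. x \<in> {0::'a} \<Longrightarrow> y \<in> {0} \<Longrightarrow> \<chi>0 (x+y) = \<chi>0 x * \<chi>0 y" unfolding \<chi>0_def by simp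
  have p5: "\<And>x. x \<in> {0::'a} \<Longrightarrow> cmod (\<chi>0 x) = 1" unfolding \<chi>0_def by simp
  show ?thesis
  proof (rule ext_step[OF p1 p2 p3 p4 p5 aH k_def w1 wk])
    fix H' \<chi>'
    assume H': "0 \<in> H'" "\<And>x y. x \<in> H' \<Longrightarrow> y \<in> H' \<Longrightarrow> x + y \<in> H'"
      "\<And>x. x \<in> H' \<Longrightarrow> -x \<in> H'"
      "\<And>x y. x \<in> H' \<Longrightarrow> y \<in> H' \<Longrightarrow> \<chi>' (x+y) = \<chi>' x * \<chi>' y"
      "\<And>x. x \<in> H' \<Longrightarrow> cmod (\<chi>' x) = 1"
      "{0} \<subseteq> H'" "a \<in> H'" "\<And>x. x \<in> {0} \<Longrightarrow> \<chi>' x = \<chi>0 x" "\<chi>' a = w"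
    from char_ext[OF H'(1-5)] obtain \<psi> where ps: "\<psi> \<in> dual" "\<forall>x\<in>H'. \<psi> x = \<chi>' x" by blast
    have "\<psi> a = w" using ps(2) H'(7,9) by simp
    thus ?thesis using ps(1) w(2) by blast
  qed
qed



lemma finite_dual: "finite (dual :: ('a::{ab_group_add,finite} \<Rightarrow> complex) set)"
proof -
  define K where "K a = (SOME k. k > 0 \<and> nsm k a = 0)" for a :: 'a
  have K: "K a > 0 \<and> nsm (K a) a = 0" for a unfolding K_def by (rule someI_ex) (rule nsm_order)
  have "dual \<subseteq> Pi UNIV (\<lambda>a. {z::complex. z ^ K a = 1})"
  proof
    fix x :: "'a \<Rightarrow> complex" assume d: "x \<in> dual"
    have "x a ^ K a = 1" for a using dual_nsm[OF d, of "K a" a] K[of a] dual_0[OF d] by simp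
    thus "x \<in> Pi UNIV (\<lambda>a. {z::complex. z ^ K a = 1})" by auto
  qed
  moreover have "finite (Pi UNIV (\<lambda>a. {z::complex. z ^ K a = 1}))"
  proof -
    have f: "finite {z::complex. z ^ K a = 1}" for a
      using K[of a] by (intro finite_roots_unity) simp
    have "finite (PiE UNIV (\<lambda>a. {z::complex. z ^ K a = 1}))"
      by (rule finite_PiE) (simp_all add: f)
    thus ?thesis by (simp only: PiE_UNIV_domain)
  qed
  ultimately show ?thesis by (rule finite_subset)
qed

lemma sum_char_group:
  fixes x :: "'a::{ab_group_add,finite} \<Rightarrow> complex"
  assumes d: "x \<in> dual" and ne: "x \<noteq> chone"
  shows "(\<Sum>a\<in>UNIV. x a) = 0"
proof -
  obtain a0 where a0: "x a0 \<noteq> 1" using ne unfolding chone_def by auto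
  have "(\<Sum>a\<in>UNIV. x (a0 + a)) = (\<Sum>a\<in>UNIV. x a)"
    by (rule sum.reindex_bij_betw, rule bij_betw_byWitness[where f'="\<lambda>a. a - a0"]) auto
  hence "x a0 * (\<Sum>a\<in>UNIV. x a) = (\<Sum>a\<in>UNIV. x a)"
    by (simp add: dual_add[OF d] sum_distrib_left)
  hence "(x a0 - 1) * (\<Sum>a\<in>UNIV. x a) = 0" by (simp add: algebra_simps)
  thus ?thesis using a0 by simp
qed

lemma sum_dual_at:
  fixes a :: "'a::{ab_group_add,finite}"
  assumes "a \<noteq> 0"
  shows "(\<Sum>x\<in>dual. x a) = 0"
proof -
  obtain \<psi> where p: "\<psi> \<in> dual" "\<psi> a \<noteq> 1" using separation[OF assms] by blast
  have "bij_betw (chmul \<psi>) dual dual"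
  proof (rule bij_betw_byWitness[where f'="chmul (chinv \<psi>)"])
    show "\<forall>x\<in>dual. chmul (chinv \<psi>) (chmul \<psi> x) = x"
      using dual_nz[OF p(1)] by (auto simp: chmul_def chinv_def fun_eq_iff)
    show "\<forall>x\<in>dual. chmul \<psi> (chmul (chinv \<psi>) x) = x"
      using dual_nz[OF p(1)] by (auto simp: chmul_def chinv_def fun_eq_iff)
    show "chmul \<psi> ` dual \<subseteq> dual" using chmul_dual p by auto
    show "chmul (chinv \<psi>) ` dual \<subseteq> dual" using chmul_dual chinv_dual p by auto
  qed
  hence "(\<Sum>x\<in>dual. chmul \<psi> x a) = (\<Sum>x\<in>dual. x a)" by (rule sum.reindex_bij_betw)
  hence "\<psi> a * (\<Sum>x\<in>dual. x a) = (\<Sum>x\<in>dual. x a)" by (simp add: chmul_def sum_distrib_left)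
  hence "(\<psi> a - 1) * (\<Sum>x\<in>dual. x a) = 0" by (simp add: algebra_simps)
  thus ?thesis using p(2) by simp
qed

lemma sum_dual_0: "(\<Sum>x\<in>(dual::('a::{ab_group_add,finite} \<Rightarrow> complex) set). x 0) = of_nat (card (dual::('a \<Rightarrow> complex) set))"
proof -
  have "(\<Sum>x\<in>(dual::('a \<Rightarrow> complex) set). x 0) = (\<Sum>x\<in>(dual::('a \<Rightarrow> complex) set). 1)"
    by (rule sum.cong) (auto simp: dual_0)
  thus ?thesis by simp
qed

lemma card_dual: "card (dual :: ('a::{ab_group_add,finite} \<Rightarrow> complex) set) = card (UNIV::'a set)"
proof -
  have e: "(\<Sum>x\<in>(dual::('a \<Rightarrow> complex) set). x a) = (if a = 0 then of_nat (card (dual::('a \<Rightarrow> complex) set)) else 0)" for a :: 'a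
    using sum_dual_at[of a] sum_dual_0 by auto
  have 1: "(\<Sum>a\<in>UNIV. \<Sum>x\<in>(dual::('a \<Rightarrow> complex) set). x a) = of_nat (card (dual::('a \<Rightarrow> complex) set))"
    unfolding e by simp
  have "(\<Sum>a\<in>UNIV. \<Sum>x\<in>(dual::('a \<Rightarrow> complex) set). x a) = (\<Sum>x\<in>(dual::('a \<Rightarrow> complex) set). \<Sum>a\<in>UNIV. x a)"
    by (rule sum.swap)
  also have "\<dots> = (\<Sum>x\<in>(dual::('a \<Rightarrow> complex) set). if x = chone then of_nat (card (UNIV::'a set)) else 0)"
    by (rule sum.cong) (auto simp: sum_char_group chone_def)
  also have "\<dots> = of_nat (card (UNIV::'a set))" using chone_dual by (simp add: sum.delta[OF finite_dual])
  finally show ?thesis using 1 by simp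
qed

lemma sum_dual_delta:
  fixes a :: "'a::{ab_group_add,finite}"
  shows "(\<Sum>x\<in>dual. x a) = of_nat (card (UNIV::'a set)) * delta a"
  using sum_dual_at[of a] sum_dual_0[where 'a='a] card_dual[where 'a='a] by (auto simp: delta_def)



lemma chmul_one[simp]: "chmul chone x = x" "chmul x chone = x"
  by (auto simp: chmul_def chone_def fun_eq_iff)

lemma chinv_chinv: "x \<in> dual \<Longrightarrow> chinv (chinv x) = x"
  by (auto simp: chinv_def fun_eq_iff)

context
  fixes c :: "'a::{ab_group_add,finite} \<Rightarrow> complex" and i :: "('a \<Rightarrow> complex) \<Rightarrow> ('a \<Rightarrow> complex)"
  assumes cd: "c \<in> dual" and cc: "chmul c c = chone"
    and bi: "bij_betw i (dual - {c}) (dual - {chone})"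
    and hi: "\<forall>x\<in>dual - {c}. i x = chmul x (i (chinv x))"
begin

lemma iP: "t \<in> dual - {c} \<Longrightarrow> i t \<in> dual" "t \<in> dual - {c} \<Longrightarrow> i t \<noteq> chone"
  using bij_betw_apply[OF bi] by auto

lemma c_sq: "c x * c x = 1"
  using cc unfolding chmul_def chone_def by (metis)

lemma chinv_c: "chinv c = c"
proof -
  have "inverse (c x) = c x" for x using c_sq[of x] by (metis inverse_unique)
  thus ?thesis by (auto simp: chinv_def fun_eq_iff)
qed

lemma c_neg: "c (-x) = c x"
  using dual_neg[OF cd] chinv_c unfolding chinv_def by (metis)

lemma chinv_P: "t \<in> dual - {c} \<Longrightarrow> chinv t \<in> dual - {c}"
  using chinv_dual chinv_chinv chinv_c by (metis Diff_iff singletonD singletonI)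

lemma oplus_dual: "u \<in> dual \<Longrightarrow> v \<in> dual \<Longrightarrow> oplus c i (Some u) (Some v) = Some w \<Longrightarrow> w \<in> dual"
proof -
  assume u: "u \<in> dual" and v: "v \<in> dual" and e: "oplus c i (Some u) (Some v) = Some w"
  define t where "t = chmul u (chinv v)"
  have t: "t \<in> dual" unfolding t_def using u v chmul_dual chinv_dual by blast
  have ne: "u \<noteq> chmul c v" and w: "w = chmul u (chinv (i t))"
    using e unfolding oplus_def t_def by (auto split: if_splits)
  have "t \<noteq> c"
  proof
    assume "t = c"
    hence "u = chmul c v" unfolding t_def using dual_nz[OF v]
      by (auto simp: chmul_def chinv_def fun_eq_iff field_simps)
    thus False using ne by simp
  qed
  hence "i t \<in> dual" using iP t by auto
  thus ?thesis unfolding w using u chmul_dual chinv_dual by blast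
qed

lemma pw: "(\<And>a. f a = g a) \<Longrightarrow> f = g" by auto

lemma oplus_char:
  assumes u: "u \<in> dual" and v: "v \<in> dual" and s: "s \<in> dual"
  shows "oplus c i (Some u) (Some v) = Some s \<longleftrightarrow>
    (\<exists>t\<in>dual - {c}. u = chmul s (i t) \<and> v = chmul (chmul s (i t)) (chinv t))"
proof
  assume e: "oplus c i (Some u) (Some v) = Some s"
  define t where "t = chmul u (chinv v)"
  have t: "t \<in> dual" unfolding t_def using u v chmul_dual chinv_dual by blast
  have ne: "u \<noteq> chmul c v" and w: "s = chmul u (chinv (i t))"
    using e unfolding oplus_def t_def by (auto split: if_splits)
  have tc: "t \<noteq> c"
  proof
    assume tc: "t = c"
    have "u = chmul c v"
    proof (rule pw)
      fix a
      have "u a * inverse (v a) = c a" using fun_cong[OF tc, of a] unfolding t_def chmul_def chinv_def .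
      thus "u a = chmul c v a" using dual_nz[OF v, of a] unfolding chmul_def by (simp add: field_simps)
    qed
    thus False using ne by simp
  qed
  have it: "i t \<in> dual" using iP t tc by auto
  have 1: "u = chmul s (i t)"
  proof (rule pw)
    fix a
    have "s a = u a * inverse (i t a)" using fun_cong[OF w, of a] unfolding chmul_def chinv_def .
    thus "u a = chmul s (i t) a" using dual_nz[OF it, of a] unfolding chmul_def by (simp add: field_simps)
  qed
  have 2: "v = chmul (chmul s (i t)) (chinv t)"
  proof (rule pw)
    fix a
    have e1: "chmul s (i t) a = u a" using 1 by simp
    have e2: "chinv t a = inverse (u a * inverse (v a))" by (simp add: t_def chmul_def chinv_def)
    have "chmul s (i t) a * chinv t a = u a * inverse (u a * inverse (v a))"
      unfolding e1 e2 ..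
    also have "\<dots> = v a" using dual_nz[OF u, of a] dual_nz[OF v, of a] by (simp add: field_simps)
    finally show "v a = chmul (chmul s (i t)) (chinv t) a" unfolding chmul_def by simp
  qed
  show "\<exists>t\<in>dual - {c}. u = chmul s (i t) \<and> v = chmul (chmul s (i t)) (chinv t)"
    using 1 2 t tc by blast
next
  assume "\<exists>t\<in>dual - {c}. u = chmul s (i t) \<and> v = chmul (chmul s (i t)) (chinv t)"
  then obtain t where t: "t \<in> dual" "t \<noteq> c" and uv: "u = chmul s (i t)" "v = chmul (chmul s (i t)) (chinv t)"
    by blast
  have it: "i t \<in> dual" using iP t by auto
  have q: "chmul u (chinv v) = t"
  proof (rule pw)
    fix a
    have "chmul u (chinv v) a = (s a * i t a) * inverse (s a * i t a * inverse (t a))"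
      unfolding uv chmul_def chinv_def by simp
    also have "\<dots> = t a" using dual_nz[OF it, of a] dual_nz[OF s, of a] dual_nz[OF t(1), of a]
      by (simp add: field_simps)
    finally show "chmul u (chinv v) a = t a" .
  qed
  have ne: "u \<noteq> chmul c v"
  proof
    assume e: "u = chmul c v"
    have "t = c"
    proof (rule pw)
      fix a
      have "t a = u a * inverse (v a)" using fun_cong[OF q, of a] unfolding chmul_def chinv_def by simp
      also have "\<dots> = c a" unfolding e chmul_def using dual_nz[OF v, of a] by (simp add: field_simps)
      finally show "t a = c a" .
    qed
    thus False using t by simp
  qed
  have r: "chmul u (chinv (i t)) = s"
  proof (rule pw)
    fix a
    show "chmul u (chinv (i t)) a = s a" unfolding uv chmul_def chinv_def using dual_nz[OF it, of a]
      by (simp add: field_simps)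
  qed
  show "oplus c i (Some u) (Some v) = Some s"
    unfolding oplus_def using ne q r by simp
qed


lemma finP: "finite (dual - {c})" using finite_dual by blast

lemma S1_eq:
  "{(x, y, z). x \<in> dual \<and> y \<in> dual \<and> z \<in> dual \<and> oplus c i (oplus c i (Some x) (Some y)) (Some z) = Some chone}
   = (\<lambda>y. (chmul c y, y, chone)) ` dual \<union>
     (\<lambda>(s,t). (chmul (i s) (i t), chmul (chmul (i s) (i t)) (chinv t), chmul (i s) (chinv s))) ` ((dual - {c}) \<times> (dual - {c}))"
  (is "?L = ?A \<union> (\<lambda>(s,t). ?G s t) ` ?PP")
proof
  show "?L \<subseteq> ?A \<union> (\<lambda>(s,t). ?G s t) ` ?PP"
  proof
    fix p assume "p \<in> ?L"
    then obtain x y z where p: "p = (x,y,z)" and d: "x\<in>dual" "y\<in>dual" "z\<in>dual"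
      and e: "oplus c i (oplus c i (Some x) (Some y)) (Some z) = Some chone" by auto
    show "p \<in> ?A \<union> (\<lambda>(s,t). ?G s t) ` ?PP"
    proof (cases "oplus c i (Some x) (Some y)")
      case None
      hence "x = chmul c y" by (simp add: oplus_def split: if_splits)
      moreover have "z = chone" using e None by (simp add: oplus_def)
      ultimately have "p \<in> ?A" using p d by blast
      thus ?thesis by blast
    next
      case (Some w)
      have wd: "w \<in> dual" using oplus_dual d Some by blast
      have "oplus c i (Some w) (Some z) = Some chone" using e Some by simp
      then obtain s where s: "s \<in> dual - {c}" "w = i s" "z = chmul (i s) (chinv s)"
        using oplus_char[OF wd d(3) chone_dual] by auto
      obtain t where t: "t \<in> dual - {c}" "x = chmul w (i t)" "y = chmul (chmul w (i t)) (chinv t)"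
        using oplus_char[OF d(1,2) wd] Some by auto
      have "(s,t) \<in> (dual - {c}) \<times> (dual - {c})" using s t by blast
      moreover have "p = (case (s,t) of (s,t) \<Rightarrow> ?G s t)" using p s t by simp
      ultimately have "p \<in> (\<lambda>(s,t). ?G s t) ` ?PP" by (rule rev_image_eqI)
      thus ?thesis by blast
    qed
  qed
next
  show "?A \<union> (\<lambda>(s,t). ?G s t) ` ?PP \<subseteq> ?L"
  proof
    fix p assume "p \<in> ?A \<union> (\<lambda>(s,t). ?G s t) ` ?PP"
    thus "p \<in> ?L"
    proof
      assume "p \<in> ?A"
      then obtain y where y: "y \<in> dual" "p = (chmul c y, y, chone)" by blast
      thus "p \<in> ?L" using chmul_dual[OF cd y(1)] chone_dual by (simp add: oplus_def)
    next
      assume "p \<in> (\<lambda>(s,t). ?G s t) ` ?PP"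
      then obtain s t where st: "s \<in> dual - {c}" "t \<in> dual - {c}"
        "p = (chmul (i s) (i t), chmul (chmul (i s) (i t)) (chinv t), chmul (i s) (chinv s))"
      proof -
        obtain q where q: "q \<in> ?PP" "p = (\<lambda>(s,t). ?G s t) q" using \<open>p \<in> (\<lambda>(s,t). ?G s t) ` ?PP\<close> by (rule imageE)
        obtain s t where qst: "q = (s,t)" by (cases q)
        show ?thesis using q unfolding qst by (intro that) auto
      qed
      have isd: "i s \<in> dual" and it: "i t \<in> dual" using iP(1)[OF st(1)] iP(1)[OF st(2)] by auto
      have xd: "chmul (i s) (i t) \<in> dual" using isd it chmul_dual by blast
      have yd: "chmul (chmul (i s) (i t)) (chinv t) \<in> dual" using xd st chmul_dual chinv_dual by blast
      have zd: "chmul (i s) (chinv s) \<in> dual" using isd st chmul_dual chinv_dual by blast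
      have 1: "oplus c i (Some (chmul (i s) (i t))) (Some (chmul (chmul (i s) (i t)) (chinv t))) = Some (i s)"
        using oplus_char[OF xd yd isd] st by blast
      have 2: "oplus c i (Some (i s)) (Some (chmul (i s) (chinv s))) = Some chone"
        using oplus_char[OF isd zd chone_dual] st by auto
      show "p \<in> ?L" using 1 2 xd yd zd st(3) by simp
    qed
  qed
qed

lemma S2_eq:
  "{(x, y, z). x \<in> dual \<and> y \<in> dual \<and> z \<in> dual \<and> oplus c i (Some x) (oplus c i (Some y) (Some z)) = Some chone}
   = (\<lambda>z. (chone, chmul c z, z)) ` dual \<union>
     (\<lambda>(s,t). (i s, chmul (chmul (i s) (chinv s)) (i t), chmul (chmul (chmul (i s) (chinv s)) (i t)) (chinv t))) ` ((dual - {c}) \<times> (dual - {c}))"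
  (is "?L = ?A \<union> (\<lambda>(s,t). ?G s t) ` ?PP")
proof
  show "?L \<subseteq> ?A \<union> (\<lambda>(s,t). ?G s t) ` ?PP"
  proof
    fix p assume "p \<in> ?L"
    then obtain x y z where p: "p = (x,y,z)" and d: "x\<in>dual" "y\<in>dual" "z\<in>dual"
      and e: "oplus c i (Some x) (oplus c i (Some y) (Some z)) = Some chone" by auto
    show "p \<in> ?A \<union> (\<lambda>(s,t). ?G s t) ` ?PP"
    proof (cases "oplus c i (Some y) (Some z)")
      case None
      hence "y = chmul c z" by (simp add: oplus_def split: if_splits)
      moreover have "x = chone" using e None by (simp add: oplus_def)
      ultimately have "p \<in> ?A" using p d by blast
      thus ?thesis by blast
    next
      case (Some w)
      have wd: "w \<in> dual" using oplus_dual d Some by blast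
      have "oplus c i (Some x) (Some w) = Some chone" using e Some by simp
      then obtain s where s: "s \<in> dual - {c}" "x = i s" "w = chmul (i s) (chinv s)"
        using oplus_char[OF d(1) wd chone_dual] by auto
      obtain t where t: "t \<in> dual - {c}" "y = chmul w (i t)" "z = chmul (chmul w (i t)) (chinv t)"
        using oplus_char[OF d(2,3) wd] Some by auto
      have "(s,t) \<in> (dual - {c}) \<times> (dual - {c})" using s t by blast
      moreover have "p = (case (s,t) of (s,t) \<Rightarrow> ?G s t)" using p s t by simp
      ultimately have "p \<in> (\<lambda>(s,t). ?G s t) ` ?PP" by (rule rev_image_eqI)
      thus ?thesis by blast
    qed
  qed
next
  show "?A \<union> (\<lambda>(s,t). ?G s t) ` ?PP \<subseteq> ?L"
  proof
    fix p assume "p \<in> ?A \<union> (\<lambda>(s,t). ?G s t) ` ?PP"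
    thus "p \<in> ?L"
    proof
      assume "p \<in> ?A"
      then obtain z where z: "z \<in> dual" "p = (chone, chmul c z, z)" by blast
      thus "p \<in> ?L" using chmul_dual[OF cd z(1)] chone_dual by (simp add: oplus_def)
    next
      assume "p \<in> (\<lambda>(s,t). ?G s t) ` ?PP"
      then obtain s t where st: "s \<in> dual - {c}" "t \<in> dual - {c}"
        "p = (i s, chmul (chmul (i s) (chinv s)) (i t), chmul (chmul (chmul (i s) (chinv s)) (i t)) (chinv t))"
      proof -
        obtain q where q: "q \<in> ?PP" "p = (\<lambda>(s,t). ?G s t) q" using \<open>p \<in> (\<lambda>(s,t). ?G s t) ` ?PP\<close> by (rule imageE)
        obtain s t where qst: "q = (s,t)" by (cases q)
        show ?thesis using q unfolding qst by (intro that) auto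
      qed
      have isd: "i s \<in> dual" and it: "i t \<in> dual" using iP(1)[OF st(1)] iP(1)[OF st(2)] by auto
      have wd: "chmul (i s) (chinv s) \<in> dual" using isd st chmul_dual chinv_dual by blast
      have yd: "chmul (chmul (i s) (chinv s)) (i t) \<in> dual" using wd it chmul_dual by blast
      have zd: "chmul (chmul (chmul (i s) (chinv s)) (i t)) (chinv t) \<in> dual" using yd st chmul_dual chinv_dual by blast
      have 1: "oplus c i (Some (chmul (chmul (i s) (chinv s)) (i t))) (Some (chmul (chmul (chmul (i s) (chinv s)) (i t)) (chinv t))) = Some (chmul (i s) (chinv s))"
        using oplus_char[OF yd zd wd] st by blast
      have 2: "oplus c i (Some (i s)) (Some (chmul (i s) (chinv s))) = Some chone"
        using oplus_char[OF isd wd chone_dual] st by auto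
      show "p \<in> ?L" using 1 2 isd yd zd st(3) by simp
    qed
  qed
qed


lemma inj_i: "inj_on i (dual - {c})" using bi bij_betw_def by blast

lemma sum_prod_split:
  "(\<Sum>(s,t)\<in>(dual - {c}) \<times> (dual - {c}). (F s :: complex) * G t) = sum F (dual - {c}) * sum G (dual - {c})"
  by (simp add: sum_product sum.cartesian_product)

lemma sum1:
  "(\<Sum>(x, y, z)\<in>{(x, y, z). x \<in> dual \<and> y \<in> dual \<and> z \<in> dual \<and>
              oplus c i (oplus c i (Some x) (Some y)) (Some z) = Some chone}. x a * y b * z g)
   = c a * (\<Sum>y\<in>dual. y (a+b)) + (\<Sum>s\<in>dual - {c}. i s (a+b) * (i s g * inverse (s g))) * (\<Sum>t\<in>dual - {c}. i t a * (i t b * inverse (t b)))"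
proof -
  define G where "G = (\<lambda>(s,t). (chmul (i s) (i t), chmul (chmul (i s) (i t)) (chinv t), chmul (i s) (chinv s)))"
  define A where "A = (\<lambda>y. (chmul c y, y, chone :: 'a \<Rightarrow> complex)) ` dual"
  define PP where "PP = (dual - {c}) \<times> (dual - {c})"
  have finA: "finite A" unfolding A_def using finite_dual by blast
  have finB: "finite (G ` PP)" unfolding PP_def using finP by blast
  have disj: "A \<inter> G ` PP = {}"
  proof (rule ccontr)
    assume "A \<inter> G ` PP \<noteq> {}"
    then obtain y s t where y: "y \<in> dual" and st: "s \<in> dual - {c}" "t \<in> dual - {c}"
      and e: "(chmul c y, y, chone) = G (s,t)" unfolding A_def PP_def by blast
    have isd: "i s \<in> dual" and it: "i t \<in> dual" using iP(1)[OF st(1)] iP(1)[OF st(2)] by auto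
    have E: "chmul c y = chmul (i s) (i t) \<and> y = chmul (chmul (i s) (i t)) (chinv t) \<and> chone = chmul (i s) (chinv s)"
      using e[unfolded G_def prod.case prod.inject] by blast
    have e1: "chmul c y = chmul (i s) (i t)" and e2: "y = chmul (chmul (i s) (i t)) (chinv t)"
      using E by blast+
    have "t = c"
    proof (rule pw)
      fix a
      have "c a * (i s a * i t a * inverse (t a)) = i s a * i t a"
        using fun_cong[OF e1, of a] fun_cong[OF e2, of a] unfolding chmul_def chinv_def by simp
      thus "t a = c a" using dual_nz[OF isd, of a] dual_nz[OF it, of a] dual_nz[of t a] st(2)
        by (simp add: field_simps)
    qed
    thus False using st by simp
  qed
  have injA: "inj_on (\<lambda>y. (chmul c y, y, chone :: 'a \<Rightarrow> complex)) dual" by (auto simp: inj_on_def)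
  have injB: "inj_on G PP"
  proof (rule inj_onI)
    fix p q assume p: "p \<in> PP" and q: "q \<in> PP" and e: "G p = G q"
    obtain s t where pst: "p = (s,t)" by (cases p)
    obtain s' t' where qst: "q = (s',t')" by (cases q)
    have st: "s \<in> dual - {c}" "t \<in> dual - {c}" "s' \<in> dual - {c}" "t' \<in> dual - {c}"
      using p q pst qst unfolding PP_def by auto
    have isd: "i s \<in> dual" "i t \<in> dual" "i s' \<in> dual" "i t' \<in> dual" using iP(1) st by auto
    have E: "chmul (i s) (i t) = chmul (i s') (i t') \<and> chmul (chmul (i s) (i t)) (chinv t) = chmul (chmul (i s') (i t')) (chinv t') \<and> chmul (i s) (chinv s) = chmul (i s') (chinv s')"
      using e[unfolded G_def pst qst prod.case prod.inject] by blast
    have e1: "chmul (i s) (i t) = chmul (i s') (i t')"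
      and e2: "chmul (chmul (i s) (i t)) (chinv t) = chmul (chmul (i s') (i t')) (chinv t')"
      using E by blast+
    have tt: "t = t'"
    proof (rule pw)
      fix a
      have "i s a * i t a * inverse (t a) = i s a * i t a * inverse (t' a)"
        using fun_cong[OF e1, of a] fun_cong[OF e2, of a] unfolding chmul_def chinv_def by simp
      thus "t a = t' a" using dual_nz[OF isd(1), of a] dual_nz[OF isd(2), of a] by simp
    qed
    have "i s = i s'"
    proof (rule pw)
      fix a
      have "i s a * i t a = i s' a * i t a" using fun_cong[OF e1, of a] tt unfolding chmul_def by simp
      thus "i s a = i s' a" using dual_nz[OF isd(2), of a] by simp
    qed
    hence "s = s'" using inj_i st unfolding inj_on_def by blast
    thus "p = q" using pst qst tt by simp
  qed
  have SA: "(\<Sum>(x, y, z)\<in>A. x a * y b * z g) = c a * (\<Sum>y\<in>dual. y (a+b))"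
  proof -
    have "(\<Sum>(x, y, z)\<in>A. x a * y b * z g) = (\<Sum>y\<in>dual. c a * y (a+b))"
      unfolding A_def sum.reindex[OF injA]
      by (rule sum.cong) (auto simp: chmul_def chone_def dual_add)
    thus ?thesis by (simp add: sum_distrib_left)
  qed
  have SB: "(\<Sum>(x, y, z)\<in>G ` PP. x a * y b * z g) =
     (\<Sum>(s,t)\<in>PP. (i s (a+b) * (i s g * inverse (s g))) * (i t a * (i t b * inverse (t b))))"
    unfolding sum.reindex[OF injB]
  proof (rule sum.cong)
    fix p assume "p \<in> PP"
    then obtain s t where pst: "p = (s,t)" and st: "s \<in> dual - {c}" "t \<in> dual - {c}"
      unfolding PP_def by blast
    have isd: "i s \<in> dual" using iP(1) st by auto
    show "((\<lambda>(x, y, z). x a * y b * z g) \<circ> G) p =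
      (case p of (s,t) \<Rightarrow> (i s (a+b) * (i s g * inverse (s g))) * (i t a * (i t b * inverse (t b))))"
      unfolding pst G_def by (simp add: chmul_def chinv_def dual_add[OF isd] mult_ac)
  qed simp
  show ?thesis
    unfolding S1_eq A_def[symmetric] G_def[symmetric] PP_def[symmetric]
    unfolding sum.union_disjoint[OF finA finB disj] SA SB unfolding PP_def sum_prod_split ..
qed

lemma sum2:
  "(\<Sum>(x, y, z)\<in>{(x, y, z). x \<in> dual \<and> y \<in> dual \<and> z \<in> dual \<and>
              oplus c i (Some x) (oplus c i (Some y) (Some z)) = Some chone}. x a * y b * z g)
   = c b * (\<Sum>y\<in>dual. y (b+g)) + (\<Sum>s\<in>dual - {c}. i s a * (i s (b+g) * inverse (s (b+g)))) * (\<Sum>t\<in>dual - {c}. i t b * (i t g * inverse (t g)))"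
proof -
  define G where "G = (\<lambda>(s,t). (i s, chmul (chmul (i s) (chinv s)) (i t), chmul (chmul (chmul (i s) (chinv s)) (i t)) (chinv t)))"
  define A where "A = (\<lambda>z. (chone :: 'a \<Rightarrow> complex, chmul c z, z)) ` dual"
  define PP where "PP = (dual - {c}) \<times> (dual - {c})"
  have finA: "finite A" unfolding A_def using finite_dual by blast
  have finB: "finite (G ` PP)" unfolding PP_def using finP by blast
  have disj: "A \<inter> G ` PP = {}"
  proof (rule ccontr)
    assume "A \<inter> G ` PP \<noteq> {}"
    then obtain y s t where y: "y \<in> dual" and st: "s \<in> dual - {c}" "t \<in> dual - {c}"
      and e: "(chone, chmul c y, y) = G (s,t)" unfolding A_def PP_def by blast
    have "i s = chone" using e unfolding G_def by simp
    thus False using iP(2)[OF st(1)] by simp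
  qed
  have injA: "inj_on (\<lambda>z. (chone :: 'a \<Rightarrow> complex, chmul c z, z)) dual" by (auto simp: inj_on_def)
  have injB: "inj_on G PP"
  proof (rule inj_onI)
    fix p q assume p: "p \<in> PP" and q: "q \<in> PP" and e: "G p = G q"
    obtain s t where pst: "p = (s,t)" by (cases p)
    obtain s' t' where qst: "q = (s',t')" by (cases q)
    have st: "s \<in> dual - {c}" "t \<in> dual - {c}" "s' \<in> dual - {c}" "t' \<in> dual - {c}"
      using p q pst qst unfolding PP_def by auto
    have isd: "i s \<in> dual" "i t \<in> dual" "i s' \<in> dual" "i t' \<in> dual" using iP(1) st by auto
    have E: "i s = i s' \<and> chmul (chmul (i s) (chinv s)) (i t) = chmul (chmul (i s') (chinv s')) (i t') \<and>
      chmul (chmul (chmul (i s) (chinv s)) (i t)) (chinv t) = chmul (chmul (chmul (i s') (chinv s')) (i t')) (chinv t')"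
      using e[unfolded G_def pst qst prod.case prod.inject] by blast
    hence ss: "s = s'" using inj_i st unfolding inj_on_def by blast
    define w where "w = chmul (i s) (chinv s)"
    have wd: "w \<in> dual" unfolding w_def using isd st chmul_dual chinv_dual by blast
    have e1: "chmul w (i t) = chmul w (i t')"
      and e2: "chmul (chmul w (i t)) (chinv t) = chmul (chmul w (i t')) (chinv t')"
      using E[folded ss] unfolding w_def by blast+
    have "i t = i t'"
    proof (rule pw)
      fix a
      have "w a * i t a = w a * i t' a"
        using fun_cong[OF e1, of a] unfolding chmul_def by simp
      thus "i t a = i t' a" using dual_nz[OF wd, of a] by simp
    qed
    hence tt: "t = t'" using inj_i st unfolding inj_on_def by blast
    thus "p = q" using pst qst ss by simp
  qed
  have SA: "(\<Sum>(x, y, z)\<in>A. x a * y b * z g) = c b * (\<Sum>y\<in>dual. y (b+g))"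
  proof -
    have "(\<Sum>(x, y, z)\<in>A. x a * y b * z g) = (\<Sum>y\<in>dual. c b * y (b+g))"
      unfolding A_def sum.reindex[OF injA]
      by (rule sum.cong) (auto simp: chmul_def chone_def dual_add)
    thus ?thesis by (simp add: sum_distrib_left)
  qed
  have SB: "(\<Sum>(x, y, z)\<in>G ` PP. x a * y b * z g) =
     (\<Sum>(s,t)\<in>PP. (i s a * (i s (b+g) * inverse (s (b+g)))) * (i t b * (i t g * inverse (t g))))"
    unfolding sum.reindex[OF injB]
  proof (rule sum.cong)
    fix p assume "p \<in> PP"
    then obtain s t where pst: "p = (s,t)" and st: "s \<in> dual - {c}" "t \<in> dual - {c}"
      unfolding PP_def by blast
    have isd: "i s \<in> dual" using iP(1) st by auto
    have sd: "s \<in> dual" using st by simp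
    show "((\<lambda>(x, y, z). x a * y b * z g) \<circ> G) p =
      (case p of (s,t) \<Rightarrow> (i s a * (i s (b+g) * inverse (s (b+g)))) * (i t b * (i t g * inverse (t g))))"
      unfolding pst G_def by (simp add: chmul_def chinv_def dual_add[OF isd] dual_add[OF sd] mult_ac)
  qed simp
  show ?thesis
    unfolding S2_eq A_def[symmetric] G_def[symmetric] PP_def[symmetric]
    unfolding sum.union_disjoint[OF finA finB disj] SA SB unfolding PP_def sum_prod_split ..
qed


lemma sum_i: "(\<Sum>t\<in>dual - {c}. i t x) = of_nat (card (UNIV::'a set)) * delta x - 1"
proof -
  have "(\<Sum>t\<in>dual - {c}. i t x) = (\<Sum>u\<in>dual - {chone}. u x)"
    using sum.reindex_bij_betw[OF bi, of "\<lambda>u. u x"] .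
  also have "\<dots> = (\<Sum>u\<in>dual. u x) - chone x"
    using sum.remove[OF finite_dual chone_dual, of "\<lambda>u. u x"] by (simp add: eq_diff_eq)
  finally show ?thesis by (simp add: sum_dual_delta chone_def)
qed

lemma bij_chinv: "bij_betw chinv (dual - {c}) (dual - {c})"
proof (rule bij_betw_byWitness[where f'=chinv])
  show "\<forall>a\<in>dual - {c}. chinv (chinv a) = a" by (auto simp: chinv_chinv)
  thus "\<forall>a\<in>dual - {c}. chinv (chinv a) = a" .
  show "chinv ` (dual - {c}) \<subseteq> dual - {c}" using chinv_P by blast
  thus "chinv ` (dual - {c}) \<subseteq> dual - {c}" .
qed

lemma sum_inv: "(\<Sum>t\<in>dual - {c}. i t 0 * (i t y * inverse (t y))) = of_nat (card (UNIV::'a set)) * delta y - 1"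
proof -
  have "(\<Sum>t\<in>dual - {c}. i t 0 * (i t y * inverse (t y))) = (\<Sum>t\<in>dual - {c}. i (chinv t) y)"
  proof (rule sum.cong)
    fix t assume t: "t \<in> dual - {c}"
    have "i (chinv t) = chmul (chinv t) (i (chinv (chinv t)))" using hi chinv_P[OF t] by blast
    hence "i (chinv t) y = inverse (t y) * i t y" using chinv_chinv t by (simp add: chmul_def chinv_def)
    thus "i t 0 * (i t y * inverse (t y)) = i (chinv t) y" using dual_0[OF iP(1)[OF t]] by simp
  qed simp
  also have "\<dots> = (\<Sum>t\<in>dual - {c}. i t y)"
    using sum.reindex_bij_betw[OF bij_chinv, of "\<lambda>u. i u y"] .
  finally show ?thesis using sum_i by simp
qed

lemma sum_neg: "(\<Sum>t\<in>dual - {c}. i t x * (i t (-x) * inverse (t (-x)))) = of_nat (card (UNIV::'a set)) * delta x - c x"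
proof -
  have "(\<Sum>t\<in>dual - {c}. i t x * (i t (-x) * inverse (t (-x)))) = (\<Sum>t\<in>dual - {c}. t x)"
  proof (rule sum.cong)
    fix t assume t: "t \<in> dual - {c}"
    have it: "i t \<in> dual" using iP(1)[OF t] .
    show "i t x * (i t (-x) * inverse (t (-x))) = t x"
      using dual_neg[OF it] dual_neg[of t x] t dual_nz[OF it, of x] by simp
  qed simp
  also have "\<dots> = (\<Sum>u\<in>dual. u x) - c x"
    using sum.remove[OF finite_dual cd, of "\<lambda>u. u x"] by (simp add: eq_diff_eq)
  finally show ?thesis by (simp add: sum_dual_delta)
qed

end



lemma add_eq_0_iff': "(x::'a::ab_group_add) + y = 0 \<longleftrightarrow> y = -x"
  by (metis add.commute eq_neg_iff_add_eq_0)

lemma final_alg: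
  fixes J :: "'a::ab_group_add \<Rightarrow> 'a \<Rightarrow> complex" and c :: "'a \<Rightarrow> complex" and m :: complex
  assumes m: "m \<noteq> 0"
  and J0: "\<And>y. m * J 0 y = m * delta y - 1" and J0': "\<And>x. m * J x 0 = m * delta x - 1"
  and Jn: "\<And>x. m * J x (-x) = m * delta x - c x" and cn: "\<And>x. c (-x) = c x" and c0: "c 0 = 1"
  and B: "Jstar J a b * Jstar J (a + b) g = Jstar J a (b + g) * Jstar J b g"
  shows "c a * (m * delta (a+b)) + (m * J (a+b) g) * (m * J a b) = c b * (m * delta (b+g)) + (m * J a (b+g)) * (m * J b g)"
proof -
  have dn: "delta (-x) = delta x" for x :: 'a by (simp add: delta_def)
  have J0x: "J 0 y = delta y - 1/m" for y using J0[of y] m by (simp add: field_simps)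
  have J0'x: "J x 0 = delta x - 1/m" for x using J0'[of x] m by (simp add: field_simps)
  have Jnx: "J x (-x) = delta x - c x/m" for x using Jn[of x] m by (simp add: field_simps)
  have Jnx': "J (-x) x = delta x - c x/m" for x using Jnx[of "-x"] by (simp add: cn dn)
  show ?thesis
    using B unfolding Jstar_def
    apply (cases "a=0"; cases "b=0"; cases "g=0"; cases "b = -a"; cases "g = -b")
    apply (simp_all add: delta_def J0x J0'x Jnx Jnx' cn c0 add_eq_0_iff' m field_simps)
    done
qed


theorem mainTheorem11:
  fixes J :: "'a::{ab_group_add,finite} \<Rightarrow> 'a \<Rightarrow> complex"
    and c :: "'a \<Rightarrow> complex"
    and i :: "('a \<Rightarrow> complex) \<Rightarrow> ('a \<Rightarrow> complex)"
    and a b g :: 'a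
  assumes "jacobi J"
    and "c \<in> dual"
    and "chmul c c = chone"
    and "bij_betw i (dual - {c}) (dual - {chone})"
    and "\<forall>x\<in>dual - {c}. i x = chmul x (i (chinv x))"
    and "\<forall>a b. J a b = (1 / of_nat (card (UNIV :: 'a set))) *
           (\<Sum>x\<in>dual - {c}. i x a * chmul (i x) (chinv x) b)"
  shows "(\<Sum>(x, y, z)\<in>{(x, y, z). x \<in> dual \<and> y \<in> dual \<and> z \<in> dual \<and>
              oplus c i (oplus c i (Some x) (Some y)) (Some z) = Some chone}.
            x a * y b * z g)
       = (\<Sum>(x, y, z)\<in>{(x, y, z). x \<in> dual \<and> y \<in> dual \<and> z \<in> dual \<and>
              oplus c i (Some x) (oplus c i (Some y) (Some z)) = Some chone}.
            x a * y b * z g)"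
proof -
  define m :: complex where "m = of_nat (card (UNIV :: 'a set))"
  have m0: "m \<noteq> 0" by (simp add: m_def)
  note ctx = assms(2-5)
  have mJ: "\<And>x y. m * J x y = (\<Sum>t\<in>dual - {c}. i t x * (i t y * inverse (t y)))"
    using assms(6) m0 by (simp add: m_def chmul_def chinv_def)
  have J0: "\<And>y. m * J 0 y = m * delta y - 1" unfolding mJ unfolding sum_inv[OF ctx] unfolding m_def ..
  have J0': "\<And>x. m * J x 0 = m * delta x - 1"
  proof -
    fix x
    have "(\<Sum>t\<in>dual - {c}. i t x * (i t 0 * inverse (t 0))) = (\<Sum>t\<in>dual - {c}. i t x)"
      by (rule sum.cong) (auto simp: dual_0 iP[OF ctx])
    thus "m * J x 0 = m * delta x - 1" unfolding mJ unfolding sum_i[OF ctx] unfolding m_def .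
  qed
  have Jn: "\<And>x. m * J x (-x) = m * delta x - c x" unfolding mJ unfolding sum_neg[OF ctx] unfolding m_def ..
  have cn: "\<And>x. c (-x) = c x" by (rule c_neg[OF ctx])
  have c0: "c 0 = 1" by (rule dual_0[OF assms(2)])
  have B: "Jstar J a b * Jstar J (a + b) g = Jstar J a (b + g) * Jstar J b g"
    using assms(1) unfolding jacobi_def by blast
  have L: "(\<Sum>(x, y, z)\<in>{(x, y, z). x \<in> dual \<and> y \<in> dual \<and> z \<in> dual \<and>
              oplus c i (oplus c i (Some x) (Some y)) (Some z) = Some chone}.
            x a * y b * z g) = c a * (m * delta (a+b)) + (m * J (a+b) g) * (m * J a b)"
    unfolding mJ unfolding sum1[OF ctx] unfolding sum_dual_delta unfolding m_def ..
  have R: "(\<Sum>(x, y, z)\<in>{(x, y, z). x \<in> dual \<and> y \<in> dual \<and> z \<in> dual \<and>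
              oplus c i (Some x) (oplus c i (Some y) (Some z)) = Some chone}.
            x a * y b * z g) = c b * (m * delta (b+g)) + (m * J a (b+g)) * (m * J b g)"
    unfolding mJ unfolding sum2[OF ctx] unfolding sum_dual_delta unfolding m_def ..
  show ?thesis unfolding L R by (rule final_alg[OF m0 J0 J0' Jn cn c0 B])
qed

end
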